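(* Let $\theta,\phi,\rho\in\mathrm{Mat}_{s\times s}(\bar k[\sigma])$ satisfy $(\partial\theta-T\mathbf 1_s)^s=0$, $\theta\phi=\phi\rho$, $(\partial\rho-T\mathbf 1_s)^s=0$, and assume the map $x\mapsto x\phi$ on $\mathrm{Mat}_{1\times s}(\bar k[\sigma])$ is injective. Then $\det\partial\phi\ne0$.
   Context: $\bar k$ is the algebraic closure of $k=\mathbb F_q(T)$. $\bar k[\sigma]$ is the noncommutative polynomial ring in $\sigma$ with $\sigma x=x^{q^{-1}}\sigma$ for $x\in\bar k$. For a matrix $\phi=\sum_i a_{(i)}\sigma^i$ with entries in $\bar k[\sigma]$ (the $a_{(i)}$ matrices over $\bar k$), $\partial\phi:=a_{(0)}$. $\mathbf 1_s$ is the $s\times s$ identity matrix. *)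

theory Defs
  imports "HOL-Algebra.Algebraic_Closure_Type" "HOL-Computational_Algebra.Fraction_Field"
    "Jordan_Normal_Form.Determinant"
begin

(* kbar = algebraic closure of k = F_q(T), where F_q is the finite field 'f, q = CARD('f) *)
type_synonym 'f kbar = "'f poly fract alg_closure"

definition Tk :: "'f::{finite,field} kbar" where
  "Tk = to_ac (Fract [:0, 1:] 1)"

definition frob_inv :: "'f::{finite,field} kbar \<Rightarrow> 'f kbar" where
  "frob_inv x = (THE y. y ^ card (UNIV :: 'f set) = x)"

(* An n x m matrix over kbar[sigma] is represented by its coefficient matrices:
   phi = sum_i A i * sigma^i, with A i an n x m matrix over kbar, finitely many nonzero. *)
type_synonym 'f smat = "nat \<Rightarrow> 'f kbar mat"

definition is_smat :: "nat \<Rightarrow> nat \<Rightarrow> 'f::{finite,field} smat \<Rightarrow> bool" where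
  "is_smat n m A \<longleftrightarrow> (\<forall>i. A i \<in> carrier_mat n m) \<and> (\<exists>N. \<forall>i\<ge>N. A i = 0\<^sub>m n m)"

(* product of an n x k and a k x m matrix over kbar[sigma], using sigma x = x^(q^-1) sigma:
   (sum_i A_i sigma^i)(sum_j B_j sigma^j) = sum_{i,j} A_i B_j^(q^-i) sigma^(i+j) *)
definition sprod :: "nat \<Rightarrow> nat \<Rightarrow> nat \<Rightarrow> 'f::{finite,field} smat \<Rightarrow> 'f smat \<Rightarrow> 'f smat" where
  "sprod n k m A B = (\<lambda>d. mat n m (\<lambda>(r, c).
      \<Sum>i\<le>d. \<Sum>l<k. A i $$ (r, l) * (frob_inv ^^ i) (B (d - i) $$ (l, c))))"

definition sdel :: "'f::{finite,field} smat \<Rightarrow> 'f kbar mat" where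
  "sdel A = A 0"

end

theory Submission
  imports Defs "HOL-Library.Function_Algebras"
begin

lemma ff_pow_card:
  fixes x :: "'f::{finite,field}"
  shows "x ^ card (UNIV :: 'f set) = x"
proof (cases "x = 0")
  case False
  have "x * (\<Prod>y\<in>UNIV-{0}. x * y) = x * x ^ (card (UNIV :: 'f set) - 1) * \<Prod>(UNIV-{0})"
    by (simp add: prod.distrib mult_ac)
  also have "x * x ^ (card (UNIV :: 'f set) - 1) = x ^ Suc (card (UNIV :: 'f set) - 1)"
    by (subst power_Suc) auto
  also have "Suc (card (UNIV :: 'f set) - 1) = card (UNIV :: 'f set)"
    using finite_UNIV_card_ge_0[where ?'a = 'f] by simp
  also have "(\<Prod>y\<in>UNIV-{0}. x * y) = (\<Prod>y\<in>UNIV-{0}. y)"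
    by (rule prod.reindex_bij_witness[of _ "\<lambda>y. y / x" "\<lambda>y. x * y"]) (use False in auto)
  finally show ?thesis
    by simp
qed (use finite_UNIV_card_ge_0[where ?'a = 'f] in auto)

lemma card_ge2: "card (UNIV :: 'f::{finite,field} set) \<ge> 2"
proof -
  have "{0, 1::'f} \<subseteq> UNIV" by simp
  hence "card {0, 1::'f} \<le> card (UNIV :: 'f set)" by (intro card_mono) auto
  thus ?thesis by simp
qed

lemma binom_zero_f:
  assumes "0 < k" "k < card (UNIV :: 'f::{finite,field} set)"
  shows "of_nat (card (UNIV :: 'f set) choose k) = (0::'f)"
proof -
  define q where "q = card (UNIV :: 'f set)"
  define pp :: "'f poly" where "pp = (\<Sum>j\<in>{1..<q}. monom (of_nat (q choose j)) j)"
  have cf: "coeff pp n = (if 0 < n \<and> n < q then of_nat (q choose n) else 0)" for n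
    unfolding pp_def coeff_sum coeff_monom by (auto simp: sum.delta')
  have ev: "poly pp b = 0" for b
  proof -
    have "poly pp b = (\<Sum>j\<in>{1..<q}. of_nat (q choose j) * b ^ j)"
      unfolding pp_def poly_sum poly_monom by simp
    moreover have "(b + 1) ^ q = (\<Sum>j\<le>q. of_nat (q choose j) * b ^ j * 1 ^ (q - j))"
      by (rule binomial_ring)
    moreover have "{..q} = insert 0 (insert q {1..<q})" using card_ge2[where 'f='f] q_def by auto
    moreover have "(b+1)^q = b + 1" "b ^ q = b" unfolding q_def by (rule ff_pow_card)+
    ultimately show ?thesis using card_ge2[where 'f='f] q_def by simp
  qed
  have "pp = 0"
  proof (rule ccontr)
    assume "pp \<noteq> 0"
    hence "card {x. poly pp x = 0} \<le> degree pp" by (rule card_poly_roots_bound)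
    moreover have "degree pp < q"
    proof -
      have "degree pp \<le> q - 1" by (rule degree_le) (auto simp: cf)
      thus ?thesis using card_ge2[where 'f='f] q_def by linarith
    qed
    ultimately show False using ev q_def by simp
  qed
  hence "coeff pp k = 0" by simp
  thus ?thesis using cf[of k] assms q_def by simp
qed

lemma of_nat_kbar_0:
  assumes "of_nat n = (0::'f::{finite,field})"
  shows "of_nat n = (0::'f kbar)"
proof -
  have "(of_nat n :: 'f kbar) = to_ac (of_nat n)" by simp
  also have "(of_nat n :: 'f poly fract) = Fract (of_nat n) 1" by (rule of_nat_fract)
  also have "(of_nat n :: 'f poly) = [:of_nat n:]" by (simp add: of_nat_poly)
  finally show ?thesis using assms by (simp add: Zero_fract_def[symmetric])
qed

lemma frob_add_kbar:
  fixes x y :: "'f::{finite,field} kbar"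
  shows "(x + y) ^ card (UNIV :: 'f set) = x ^ card (UNIV :: 'f set) + y ^ card (UNIV :: 'f set)"
proof -
  define q where "q = card (UNIV :: 'f set)"
  have q2: "q \<ge> 2" using card_ge2[where 'f='f] q_def by simp
  have "(x + y) ^ q = (\<Sum>j\<le>q. of_nat (q choose j) * x ^ j * y ^ (q - j))"
    by (rule binomial_ring)
  also have "\<dots> = (\<Sum>j\<in>{0,q}. of_nat (q choose j) * x ^ j * y ^ (q - j))"
  proof (rule sum.mono_neutral_right)
    show "\<forall>i\<in>{..q} - {0, q}. of_nat (q choose i) * x ^ i * y ^ (q - i) = 0"
    proof
      fix i assume "i \<in> {..q} - {0, q}"
      hence "0 < i" "i < q" by auto
      hence "of_nat (q choose i) = (0::'f kbar)"
        using binom_zero_f[where 'f='f] q_def of_nat_kbar_0 by metis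
      thus "of_nat (q choose i) * x ^ i * y ^ (q - i) = 0" by simp
    qed
  qed auto
  also have "\<dots> = x ^ q + y ^ q" using q2 by simp
  finally show ?thesis unfolding q_def .
qed

lemma root_exists:
  fixes a :: "'f::{finite,field} kbar"
  shows "\<exists>y. y ^ card (UNIV :: 'f set) = a"
proof -
  define q where "q = card (UNIV :: 'f set)"
  have q2: "q \<ge> 2" using card_ge2[where 'f='f] q_def by simp
  define f where "f k = (if k = q then 1 else if k = 0 then -a else 0)" for k
  have "\<exists>x. (\<Sum>k\<le>q. f k * x ^ k) = 0"
    by (rule alg_closed) (use q2 in \<open>auto simp: f_def\<close>)
  then obtain x where x: "(\<Sum>k\<le>q. f k * x ^ k) = 0" by blast
  have "(\<Sum>k\<le>q. f k * x ^ k) = (\<Sum>k\<in>{0,q}. f k * x ^ k)"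
    by (rule sum.mono_neutral_right) (auto simp: f_def)
  also have "\<dots> = x ^ q - a" using q2 by (simp add: f_def)
  finally show ?thesis using x q_def by auto
qed

lemma root_unique:
  fixes y z :: "'f::{finite,field} kbar"
  assumes "y ^ card (UNIV :: 'f set) = z ^ card (UNIV :: 'f set)"
  shows "y = z"
proof -
  have "(y - z) ^ card (UNIV :: 'f set) + z ^ card (UNIV :: 'f set) = y ^ card (UNIV :: 'f set)"
    using frob_add_kbar[of "y - z" z] by simp
  hence "(y - z) ^ card (UNIV :: 'f set) = 0" using assms by simp
  thus ?thesis by simp
qed

lemma fi_pow: "frob_inv (x::'f::{finite,field} kbar) ^ card (UNIV :: 'f set) = x"
  unfolding frob_inv_def
  by (rule theI') (use root_exists root_unique in metis)

lemma fi_of_pow: "frob_inv ((y::'f::{finite,field} kbar) ^ card (UNIV :: 'f set)) = y"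
  by (rule root_unique) (simp add: fi_pow)

lemma fi_inj: "frob_inv (x::'f::{finite,field} kbar) = frob_inv y \<Longrightarrow> x = y"
  by (metis fi_pow)

lemma fi_add: "frob_inv ((x::'f::{finite,field} kbar) + y) = frob_inv x + frob_inv y"
  by (metis fi_of_pow fi_pow frob_add_kbar)

lemma fi_mult: "frob_inv ((x::'f::{finite,field} kbar) * y) = frob_inv x * frob_inv y"
  by (metis fi_of_pow fi_pow power_mult_distrib)

lemma fi_0: "frob_inv (0::'f::{finite,field} kbar) = 0"
  by (metis fi_of_pow zero_power card_ge2 less_le_trans zero_less_numeral)

lemma fi_1: "frob_inv (1::'f::{finite,field} kbar) = 1"
  by (metis fi_of_pow power_one)

lemma fi_uminus: "frob_inv (- (x::'f::{finite,field} kbar)) = - frob_inv x"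
  by (metis add_eq_0_iff fi_0 fi_add)

lemma fi_diff: "frob_inv ((x::'f::{finite,field} kbar) - y) = frob_inv x - frob_inv y"
proof -
  have "frob_inv x = frob_inv (x - y) + frob_inv y" using fi_add[of "x - y" y] by simp
  thus ?thesis by simp
qed

lemma fi_sum: "frob_inv (\<Sum>i\<in>A. (f i::'f::{finite,field} kbar)) = (\<Sum>i\<in>A. frob_inv (f i))"
  by (induction A rule: infinite_finite_induct) (auto simp: fi_0 fi_add)

lemma fin_0: "(frob_inv ^^ n) (0::'f::{finite,field} kbar) = 0"
  by (induction n) (auto simp: fi_0)
lemma fin_add: "(frob_inv ^^ n) ((x::'f::{finite,field} kbar) + y) = (frob_inv ^^ n) x + (frob_inv ^^ n) y"
  by (induction n) (auto simp: fi_add)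
lemma fin_mult: "(frob_inv ^^ n) ((x::'f::{finite,field} kbar) * y) = (frob_inv ^^ n) x * (frob_inv ^^ n) y"
  by (induction n) (auto simp: fi_mult)
lemma fin_sum: "(frob_inv ^^ n) (\<Sum>i\<in>A. (f i::'f::{finite,field} kbar)) = (\<Sum>i\<in>A. (frob_inv ^^ n) (f i))"
  by (induction n) (auto simp: fi_sum)
lemma fin_comp: "(frob_inv ^^ m) ((frob_inv ^^ n) (x::'f::{finite,field} kbar)) = (frob_inv ^^ (m + n)) x"
  by (simp add: funpow_add)

type_synonym 'f rw = "nat \<Rightarrow> nat \<Rightarrow> 'f kbar"

definition rmul :: "nat \<Rightarrow> 'f::{finite,field} smat \<Rightarrow> 'f rw \<Rightarrow> 'f rw" where
  "rmul s A f = (\<lambda>d c. if c < s then (\<Sum>i\<le>d. \<Sum>l<s. f i l * (frob_inv ^^ i) (A (d - i) $$ (l, c))) else 0)"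

definition sg :: "'f::{finite,field} rw \<Rightarrow> 'f rw" where
  "sg f = (\<lambda>d c. if d = 0 then 0 else frob_inv (f (d - 1) c))"

definition sc :: "'f::{finite,field} kbar \<Rightarrow> 'f rw \<Rightarrow> 'f rw" where
  "sc a f = (\<lambda>d c. a * f d c)"

definition isrow :: "nat \<Rightarrow> 'f::{finite,field} rw \<Rightarrow> bool" where
  "isrow s f \<longleftrightarrow> (\<forall>d c. s \<le> c \<longrightarrow> f d c = 0) \<and> (\<exists>N. \<forall>d\<ge>N. \<forall>c. f d c = 0)"

lemma sum_fun_app: "(\<Sum>k\<in>K. (F k :: 'f::{finite,field} rw)) d c = (\<Sum>k\<in>K. F k d c)"
  by (induction K rule: infinite_finite_induct) (auto simp: plus_fun_def zero_fun_def)

lemma add_app[simp]: "((f::'f::{finite,field} rw) + g) d c = f d c + g d c"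
  by (simp add: plus_fun_def)
lemma diff_app[simp]: "((f::'f::{finite,field} rw) - g) d c = f d c - g d c"
  by (simp add: fun_diff_def)
lemma uminus_app[simp]: "(- (f::'f::{finite,field} rw)) d c = - f d c"
  by (simp add: fun_Compl_def)
lemma zero_app[simp]: "(0::'f::{finite,field} rw) d c = 0"
  by (simp add: zero_fun_def)
lemma sc_app[simp]: "sc a f d c = a * f d c"
  by (simp add: sc_def)

lemma rw_eqI: "(\<And>d c. (f::'f::{finite,field} rw) d c = g d c) \<Longrightarrow> f = g"
  by (auto simp: fun_eq_iff)

lemma rmul_add: "rmul s A (f + g) = rmul s A f + rmul s A g"
  by (rule rw_eqI) (simp add: rmul_def distrib_right sum.distrib)

lemma rmul_sc: "rmul s A (sc a f) = sc a (rmul s A f)"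
  by (rule rw_eqI) (simp add: rmul_def sum_distrib_left mult.assoc)

lemma rmul_zero: "rmul s A 0 = 0"
  by (rule rw_eqI) (simp add: rmul_def)

lemma rmul_uminus: "rmul s A (- f) = - rmul s A f"
  by (rule rw_eqI) (simp add: rmul_def sum_negf)

lemma rmul_diff: "rmul s A (f - g) = rmul s A f - rmul s A g"
  by (metis diff_conv_add_uminus rmul_add rmul_uminus)

lemma rmul_sum: "rmul s A (\<Sum>k\<in>K. F k) = (\<Sum>k\<in>K. rmul s A (F k))"
proof (induction K rule: infinite_finite_induct)
  case (insert x K)
  show ?case by (simp only: sum.insert[OF insert(1,2)] rmul_add insert.IH)
qed (simp_all add: rmul_def fun_eq_iff)

lemma rmul_const: "rmul s A f 0 c = (if c < s then (\<Sum>l<s. f 0 l * A 0 $$ (l, c)) else 0)"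
  by (simp add: rmul_def)

lemma sg_add: "sg (f + g) = sg f + sg g"
  by (rule rw_eqI) (simp add: sg_def fi_add)
lemma sg_sc: "sg (sc a f) = sc (frob_inv a) (sg f)"
  by (rule rw_eqI) (simp add: sg_def fi_mult)
lemma sg_diff: "sg (f - g) = sg f - sg g"
  by (rule rw_eqI) (simp add: sg_def fi_diff)
lemma sg_zero: "sg 0 = 0"
  by (rule rw_eqI) (simp add: sg_def fi_0)
lemma sg_inj: assumes "sg f = sg g" shows "f = g"
proof (rule rw_eqI)
  fix d c
  have "sg f (Suc d) c = sg g (Suc d) c" using assms by simp
  thus "f d c = g d c" by (simp add: sg_def fi_inj)
qed

lemma rmul_sg: "rmul s A (sg f) = sg (rmul s A f)"
proof (rule rw_eqI)
  fix d c
  show "rmul s A (sg f) d c = sg (rmul s A f) d c"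
  proof (cases d)
    case 0 thus ?thesis by (simp add: rmul_def sg_def)
  next
    case (Suc d')
    have "rmul s A (sg f) d c = (if c < s then (\<Sum>i\<le>d'. \<Sum>l<s. frob_inv (f i l) * (frob_inv ^^ Suc i) (A (d' - i) $$ (l, c))) else 0)"
      unfolding rmul_def Suc by (subst sum.atMost_Suc_shift) (simp add: sg_def)
    also have "\<dots> = sg (rmul s A f) d c"
      unfolding rmul_def sg_def Suc by (simp add: fi_sum fi_mult fi_0)
    finally show ?thesis .
  qed
qed

lemma triangle_sum:
  "(\<Sum>i\<le>(d::nat). \<Sum>j\<le>i. (g j i :: 'a::comm_monoid_add)) = (\<Sum>j\<le>d. \<Sum>k\<le>d - j. g j (j + k))"
proof -
  have "(\<Sum>(a,b)\<in>{(a,b). a + b \<le> d}. g a (a + b)) = (\<Sum>k\<le>d. \<Sum>a\<le>k. g a (a + (k - a)))"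
    by (rule sum.triangle_reindex_eq)
  also have "\<dots> = (\<Sum>i\<le>d. \<Sum>j\<le>i. g j i)" by (intro sum.cong) auto
  finally have 1: "(\<Sum>(a,b)\<in>{(a,b). a + b \<le> d}. g a (a + b)) = (\<Sum>i\<le>d. \<Sum>j\<le>i. g j i)" .
  have "{(a,b). a + b \<le> d} = Sigma {..d} (\<lambda>a. {..d - a})" by auto
  hence "(\<Sum>(a,b)\<in>{(a,b). a + b \<le> d}. g a (a + b)) = (\<Sum>a\<le>d. \<Sum>b\<le>d - a. g a (a + b))"
    by (simp add: sum.Sigma)
  with 1 show ?thesis by simp
qed

lemma swap3: "(\<Sum>l\<in>A. (\<Sum>j\<in>B. \<Sum>l'\<in>CC. xx j l' l) * (yy l :: 'a::comm_semiring_1)) = (\<Sum>j\<in>B. \<Sum>l'\<in>CC. \<Sum>l\<in>A. xx j l' l * yy l)"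
proof -
  have "(\<Sum>l\<in>A. (\<Sum>j\<in>B. \<Sum>l'\<in>CC. xx j l' l) * yy l) = (\<Sum>l\<in>A. \<Sum>j\<in>B. \<Sum>l'\<in>CC. xx j l' l * yy l)"
    by (simp only: sum_distrib_right)
  also have "\<dots> = (\<Sum>j\<in>B. \<Sum>l\<in>A. \<Sum>l'\<in>CC. xx j l' l * yy l)" by (rule sum.swap)
  also have "\<dots> = (\<Sum>j\<in>B. \<Sum>l'\<in>CC. \<Sum>l\<in>A. xx j l' l * yy l)" by (rule sum.cong[OF refl], rule sum.swap)
  finally show ?thesis .
qed

lemma rmul_assoc: "rmul s B (rmul s A f) = rmul s (sprod s s s A B) f"
proof (rule rw_eqI)
  fix d c
  show "rmul s B (rmul s A f) d c = rmul s (sprod s s s A B) f d c"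
  proof (cases "c < s")
    case False thus ?thesis by (simp add: rmul_def)
  next
    case True
    have "rmul s B (rmul s A f) d c = (\<Sum>i\<le>d. \<Sum>l<s. (\<Sum>j\<le>i. \<Sum>l'<s. f j l' * (frob_inv ^^ j) (A (i - j) $$ (l', l))) * (frob_inv ^^ i) (B (d - i) $$ (l, c)))"
      using True by (simp add: rmul_def)
    also have "\<dots> = (\<Sum>i\<le>d. \<Sum>j\<le>i. \<Sum>l'<s. \<Sum>l<s. f j l' * (frob_inv ^^ j) (A (i - j) $$ (l', l)) * (frob_inv ^^ i) (B (d - i) $$ (l, c)))"
      by (rule sum.cong[OF refl], rule swap3)
    also have "\<dots> = (\<Sum>j\<le>d. \<Sum>k\<le>d - j. \<Sum>l'<s. \<Sum>l<s. f j l' * (frob_inv ^^ j) (A (j + k - j) $$ (l', l)) * (frob_inv ^^ (j + k)) (B (d - (j + k)) $$ (l, c)))"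
      by (rule triangle_sum)
    also have "\<dots> = (\<Sum>j\<le>d. \<Sum>k\<le>d - j. \<Sum>l'<s. \<Sum>l<s. f j l' * ((frob_inv ^^ j) (A k $$ (l', l)) * (frob_inv ^^ j) ((frob_inv ^^ k) (B (d - j - k) $$ (l, c)))))"
      by (simp add: fin_comp mult.assoc add.commute diff_diff_eq)
    also have "\<dots> = (\<Sum>j\<le>d. \<Sum>l'<s. \<Sum>k\<le>d - j. \<Sum>l<s. f j l' * ((frob_inv ^^ j) (A k $$ (l', l)) * (frob_inv ^^ j) ((frob_inv ^^ k) (B (d - j - k) $$ (l, c)))))"
      by (rule sum.cong[OF refl], rule sum.swap)
    also have "\<dots> = (\<Sum>j\<le>d. \<Sum>l'<s. f j l' * (frob_inv ^^ j) (\<Sum>k\<le>d - j. \<Sum>l<s. A k $$ (l', l) * (frob_inv ^^ k) (B (d - j - k) $$ (l, c))))"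
      by (simp only: fin_sum fin_mult sum_distrib_left)
    also have "\<dots> = rmul s (sprod s s s A B) f d c"
      using True by (simp add: rmul_def sprod_def)
    finally show ?thesis .
  qed
qed

lemma isrow_add: "isrow s f \<Longrightarrow> isrow s g \<Longrightarrow> isrow s (f + g)"
  unfolding isrow_def by (auto, metis (full_types) add.right_neutral le_trans nat_le_linear)
lemma isrow_sc: "isrow s f \<Longrightarrow> isrow s (sc a f)"
  unfolding isrow_def sc_def by fastforce
lemma isrow_zero: "isrow s 0"
  unfolding isrow_def by auto
lemma isrow_uminus: "isrow s f \<Longrightarrow> isrow s (- f)"
  unfolding isrow_def by auto
lemma isrow_diff: "isrow s f \<Longrightarrow> isrow s g \<Longrightarrow> isrow s (f - g)"
  by (metis diff_conv_add_uminus isrow_add isrow_uminus)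
lemma isrow_sum: "(\<And>k. k \<in> K \<Longrightarrow> isrow s (F k)) \<Longrightarrow> isrow s (\<Sum>k\<in>K. F k)"
proof (induction K rule: infinite_finite_induct)
  case (insert x K)
  show ?case unfolding sum.insert[OF insert(1,2)] by (rule isrow_add) (use insert in auto)
qed (auto simp: isrow_def)
lemma isrow_sg: assumes "isrow s f" shows "isrow s (sg f)"
proof -
  obtain N where N: "\<forall>d\<ge>N. \<forall>c. f d c = 0" using assms unfolding isrow_def by blast
  have S: "\<forall>d c. s \<le> c \<longrightarrow> f d c = 0" using assms unfolding isrow_def by blast
  have "\<forall>d\<ge>Suc N. \<forall>c. sg f d c = 0" using N by (auto simp: sg_def fi_0)
  moreover have "\<forall>d c. s \<le> c \<longrightarrow> sg f d c = 0" using S by (auto simp: sg_def fi_0)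
  ultimately show ?thesis unfolding isrow_def by blast
qed

lemma isrow_rmul:
  assumes "isrow s f" "is_smat s s A"
  shows "isrow s (rmul s A f)"
proof -
  obtain N1 where N1: "\<forall>d\<ge>N1. \<forall>c. f d c = 0" using assms(1) unfolding isrow_def by blast
  obtain N2 where N2: "\<forall>i\<ge>N2. A i = 0\<^sub>m s s" using assms(2) unfolding is_smat_def by blast
  have "rmul s A f d c = 0" if "d \<ge> N1 + N2" for d c
  proof -
    have "f i l * (frob_inv ^^ i) (A (d - i) $$ (l, c)) = 0" if "l < s" "c < s" for i l
    proof (cases "i \<ge> N1")
      case True thus ?thesis using N1 by simp
    next
      case False
      hence "A (d - i) = 0\<^sub>m s s" using N2 \<open>d \<ge> N1 + N2\<close> by simp
      thus ?thesis using that by (simp add: fin_0)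
    qed
    thus ?thesis unfolding rmul_def by (auto intro!: sum.neutral)
  qed
  hence "\<forall>d\<ge>N1+N2. \<forall>c. rmul s A f d c = 0" by blast
  moreover have "\<forall>d c. s \<le> c \<longrightarrow> rmul s A f d c = 0" by (simp add: rmul_def)
  ultimately show ?thesis unfolding isrow_def by blast
qed

lemma unsg:
  assumes "isrow s f" "\<And>c. f 0 c = 0"
  shows "\<exists>g. isrow s g \<and> f = sg g"
proof -
  define g where "g = (\<lambda>d c. f (Suc d) c ^ card (UNIV :: 'a set))"
  have fg: "f = sg g"
    by (rule rw_eqI) (auto simp: sg_def g_def fi_of_pow assms(2) gr0_conv_Suc)
  have q0: "0 < card (UNIV :: 'a set)" using card_ge2[where 'f='a] by linarith
  obtain N where N: "\<forall>d\<ge>N. \<forall>c. f d c = 0" using assms(1) unfolding isrow_def by blast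
  have S: "\<forall>d c. s \<le> c \<longrightarrow> f d c = 0" using assms(1) unfolding isrow_def by blast
  have "isrow s g" unfolding isrow_def g_def using N S q0 by (auto intro!: exI[of _ N])
  with fg show ?thesis by blast
qed

lemma Fract_pow: "Fract (a::'a::idom) 1 ^ n = Fract (a ^ n) 1"
  by (induction n) (auto simp: One_fract_def)

lemma Tk_pow: "(Tk::'f::{finite,field} kbar) ^ n = to_ac (Fract ([:0, 1:] ^ n) 1)"
  unfolding Tk_def by (simp flip: to_ac_power add: Fract_pow)

lemma Tk_pow_inj:
  assumes "(Tk::'f::{finite,field} kbar) ^ a = Tk ^ b" shows "a = b"
proof -
  have "Fract ([:0, 1:] ^ a) 1 = (Fract ([:0, 1:] ^ b) 1 :: 'f poly fract)"
    using assms unfolding Tk_pow by simp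
  hence "([:0, 1:] ^ a :: 'f poly) = [:0, 1:] ^ b" by (simp add: eq_fract)
  hence "degree ([:0, 1:] ^ a :: 'f poly) = degree ([:0, 1:] ^ b :: 'f poly)" by simp
  thus ?thesis by (simp add: degree_power_eq)
qed

definition mu :: "'f::{finite,field} itself \<Rightarrow> nat \<Rightarrow> 'f kbar" where
  "mu _ n = Tk ^ (card (UNIV :: 'f set) ^ Suc n)"

lemma mu_inj: "mu TYPE('f::{finite,field}) n = mu TYPE('f) m \<Longrightarrow> n = m"
proof -
  assume "mu TYPE('f) n = mu TYPE('f) m"
  hence "card (UNIV :: 'f set) ^ Suc n = card (UNIV :: 'f set) ^ Suc m"
    unfolding mu_def by (rule Tk_pow_inj)
  thus "n = m" using card_ge2[where 'f='f] by (simp add: power_inject_exp)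
qed

lemma mu_neq_T: "mu TYPE('f::{finite,field}) n \<noteq> Tk"
proof
  assume "mu TYPE('f) n = Tk"
  hence "(Tk::'f kbar) ^ (card (UNIV :: 'f set) ^ Suc n) = Tk ^ (card (UNIV :: 'f set) ^ 0)"
    unfolding mu_def by simp
  hence e: "card (UNIV :: 'f set) ^ Suc n = card (UNIV :: 'f set) ^ 0" by (rule Tk_pow_inj)
  have q1: "1 < card (UNIV :: 'f set)" using card_ge2[where 'f='f] by linarith
  have "Suc n = 0" using e power_inject_exp[OF q1] by metis
  thus False by simp
qed

lemma mu_pow: "mu TYPE('f::{finite,field}) n ^ card (UNIV :: 'f set) = mu TYPE('f) (Suc n)"
  unfolding mu_def by (simp add: power_mult[symmetric] mult.commute)

lemma mu_0: "mu TYPE('f::{finite,field}) 0 = Tk ^ card (UNIV :: 'f set)"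
  unfolding mu_def by simp

lemma many_vecs_dep:
  fixes w :: "nat \<Rightarrow> nat \<Rightarrow> 'a::field"
  shows "\<exists>a. (\<exists>k\<le>n. a k \<noteq> 0) \<and> (\<forall>i<n. (\<Sum>k\<le>n. a k * w k i) = 0)"
proof -
  define cv where "cv i = vec (Suc n) (\<lambda>k. w k i)" for i
  define A where "A = mat\<^sub>r (Suc n) (Suc n) (\<lambda>i. if i = n then 0\<^sub>v (Suc n) else cv i)"
  have "det A = 0" unfolding A_def by (rule det_row_0) (auto simp: cv_def)
  moreover have A: "A \<in> carrier_mat (Suc n) (Suc n)" unfolding A_def by simp
  ultimately obtain v where v: "v \<in> carrier_vec (Suc n)" "v \<noteq> 0\<^sub>v (Suc n)" "A *\<^sub>v v = 0\<^sub>v (Suc n)"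
    using det_0_iff_vec_prod_zero[OF A] by blast
  have "\<exists>k<Suc n. v $ k \<noteq> 0"
  proof (rule ccontr)
    assume "\<not> ?thesis"
    hence "v = 0\<^sub>v (Suc n)" using v(1) by (auto simp: vec_eq_iff)
    with v(2) show False by simp
  qed
  hence "\<exists>k\<le>n. v $ k \<noteq> 0" using less_Suc_eq_le by blast
  moreover have "(\<Sum>k\<le>n. v $ k * w k i) = 0" if "i < n" for i
  proof -
    have "(A *\<^sub>v v) $ i = 0" using v(3) that by simp
    moreover have "row A i = cv i" using that unfolding A_def by (simp add: cv_def)
    ultimately have "cv i \<bullet> v = 0" using that A by simp
    moreover have "cv i \<bullet> v = (\<Sum>k<Suc n. w k i * v $ k)"
      using v(1) unfolding cv_def scalar_prod_def by (simp add: atLeast0LessThan)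
    ultimately show ?thesis by (simp add: lessThan_Suc_atMost mult.commute)
  qed
  ultimately show ?thesis by (intro exI[of _ "\<lambda>k. v $ k"]) auto
qed

lemma det0_left_kernel:
  fixes A :: "'a::field mat"
  assumes A: "A \<in> carrier_mat s s" and "det A = 0"
  shows "\<exists>v. (\<exists>l<s. v l \<noteq> 0) \<and> (\<forall>c<s. (\<Sum>l<s. v l * A $$ (l, c)) = 0)"
proof -
  have At: "transpose_mat A \<in> carrier_mat s s" using A by simp
  have "det (transpose_mat A) = 0" using assms det_transpose[OF A] by simp
  then obtain w where w: "w \<in> carrier_vec s" "w \<noteq> 0\<^sub>v s" "transpose_mat A *\<^sub>v w = 0\<^sub>v s"
    using det_0_iff_vec_prod_zero[OF At] by blast
  have "\<exists>l<s. w $ l \<noteq> 0"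
  proof (rule ccontr)
    assume "\<not> ?thesis"
    hence "w = 0\<^sub>v s" using w(1) by (auto simp: vec_eq_iff)
    with w(2) show False by simp
  qed
  moreover have "(\<Sum>l<s. w $ l * A $$ (l, c)) = 0" if "c < s" for c
  proof -
    have "(transpose_mat A *\<^sub>v w) $ c = 0" using w(3) that by simp
    moreover have "(transpose_mat A *\<^sub>v w) $ c = (\<Sum>l<s. A $$ (l, c) * w $ l)"
      using that A w(1) by (simp add: scalar_prod_def atLeast0LessThan)
    ultimately show ?thesis by (simp add: mult.commute)
  qed
  ultimately show ?thesis by (intro exI[of _ "\<lambda>l. w $ l"]) auto
qed

definition op :: "nat \<Rightarrow> 'f::{finite,field} smat \<Rightarrow> 'f kbar \<Rightarrow> 'f rw \<Rightarrow> 'f rw" where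
  "op s A a f = rmul s A f - sc a f"

lemma isrow_op: "isrow s f \<Longrightarrow> is_smat s s A \<Longrightarrow> isrow s (op s A a f)"
  unfolding op_def by (intro isrow_diff isrow_rmul isrow_sc)

lemma isrow_op_pow: "isrow s f \<Longrightarrow> is_smat s s A \<Longrightarrow> isrow s ((op s A a ^^ n) f)"
  by (induction n) (auto simp: isrow_op)

lemma op_pow_const:
  assumes A: "is_smat s s A" and f: "isrow s f" and c: "c < s"
  shows "((op s A a) ^^ n) f 0 c = (\<Sum>l<s. f 0 l * ((A 0 - a \<cdot>\<^sub>m 1\<^sub>m s) ^\<^sub>m n) $$ (l, c))"
  using c
proof (induction n arbitrary: c)
  case 0
  have "(\<Sum>l<s. f 0 l * (1\<^sub>m s $$ (l, c))) = (\<Sum>l<s. if l = c then f 0 l else 0)"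
    using 0 by (intro sum.cong) auto
  also have "\<dots> = f 0 c" using 0 by simp
  finally show ?case using A 0 by (simp add: is_smat_def)
next
  case (Suc n)
  define B where "B = A 0 - a \<cdot>\<^sub>m 1\<^sub>m s"
  define P where "P = B ^\<^sub>m n"
  have A0: "A 0 \<in> carrier_mat s s" using A by (simp add: is_smat_def)
  have B: "B \<in> carrier_mat s s" unfolding B_def using A0 by (intro minus_carrier_mat) simp
  have P: "P \<in> carrier_mat s s" unfolding P_def using B by simp
  define g where "g = (op s A a ^^ n) f"
  have g: "g 0 l = (\<Sum>m<s. f 0 m * P $$ (m, l))" if "l < s" for l
    using Suc.IH[OF that] unfolding g_def P_def B_def .
  have "((op s A a) ^^ Suc n) f 0 c = (\<Sum>l<s. g 0 l * A 0 $$ (l, c)) - a * g 0 c"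
    using Suc.prems unfolding g_def by (simp add: op_def rmul_const)
  also have "\<dots> = (\<Sum>l<s. (\<Sum>m<s. f 0 m * P $$ (m, l)) * A 0 $$ (l, c)) - a * (\<Sum>m<s. f 0 m * P $$ (m, c))"
    using g Suc.prems by simp
  also have "\<dots> = (\<Sum>m<s. f 0 m * ((\<Sum>l<s. P $$ (m, l) * A 0 $$ (l, c)) - a * P $$ (m, c)))"
  proof -
    have s1: "(\<Sum>l<s. (\<Sum>m<s. f 0 m * P $$ (m, l)) * A 0 $$ (l, c)) = (\<Sum>m<s. f 0 m * (\<Sum>l<s. P $$ (m, l) * A 0 $$ (l, c)))"
      unfolding sum_distrib_right sum_distrib_left by (subst sum.swap) (simp add: mult.assoc)
    have s2: "a * (\<Sum>m<s. f 0 m * P $$ (m, c)) = (\<Sum>m<s. f 0 m * (a * P $$ (m, c)))"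
      by (simp add: sum_distrib_left mult.left_commute)
    show ?thesis unfolding s1 s2 by (simp add: right_diff_distrib sum_subtractf)
  qed
  also have "\<dots> = (\<Sum>m<s. f 0 m * (P * B) $$ (m, c))"
  proof (intro sum.cong refl arg_cong2[where f="(*)"])
    fix m assume m: "m \<in> {..<s}"
    have "(P * B) $$ (m, c) = (\<Sum>l<s. P $$ (m, l) * B $$ (l, c))"
      using P B m Suc.prems by (simp add: scalar_prod_def atLeast0LessThan)
    also have "\<dots> = (\<Sum>l<s. P $$ (m, l) * A 0 $$ (l, c) - (if l = c then a * P $$ (m, l) else 0))"
      using A0 Suc.prems unfolding B_def by (intro sum.cong refl) (auto simp: right_diff_distrib)
    also have "\<dots> = (\<Sum>l<s. P $$ (m, l) * A 0 $$ (l, c)) - a * P $$ (m, c)"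
      using Suc.prems by (simp add: sum_subtractf)
    finally show "(\<Sum>l<s. P $$ (m, l) * A 0 $$ (l, c)) - a * P $$ (m, c) = (P * B) $$ (m, c)" by simp
  qed
  finally show ?case unfolding P_def B_def by simp
qed

lemma sc_sc: "sc a (sc b f) = sc (a * b) f"
  by (rule rw_eqI) (simp add: mult.assoc)
lemma sc_one: "sc 1 f = f"
  by (rule rw_eqI) simp
lemma sc_add: "sc a (f + g) = sc a f + sc a g"
  by (rule rw_eqI) (simp add: distrib_left)
lemma sc_diff: "sc a (f - g) = sc a f - sc a g"
  by (rule rw_eqI) (simp add: right_diff_distrib)
lemma sc_zero: "sc a 0 = 0"
  by (rule rw_eqI) simp

lemma op_add: "op s A a (f + g) = op s A a f + op s A a g"
  by (rule rw_eqI) (simp add: op_def rmul_add distrib_left)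
lemma op_sc: "op s A a (sc b f) = sc b (op s A a f)"
  by (rule rw_eqI) (simp add: op_def rmul_sc algebra_simps)
lemma op_diff: "op s A a (f - g) = op s A a f - op s A a g"
  by (rule rw_eqI) (simp add: op_def rmul_diff algebra_simps)
lemma op_zero: "op s A a 0 = 0"
  by (rule rw_eqI) (simp add: op_def rmul_zero)
lemma op_sum: "op s A a (\<Sum>k\<in>K. F k) = (\<Sum>k\<in>K. op s A a (F k))"
proof (induction K rule: infinite_finite_induct)
  case (insert x K)
  show ?case by (simp only: sum.insert[OF insert(1,2)] op_add insert.IH)
next
  case (infinite K)
  show ?case by (simp only: sum.infinite[OF infinite] op_zero)
next
  case empty
  show ?case by (simp only: sum.empty op_zero)
qed

lemma op_comm: "op s A a (op s A b f) = op s A b (op s A a f)"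
  by (rule rw_eqI) (simp add: op_def rmul_diff rmul_sc algebra_simps)

lemma op_pow_comm: "op s A a ((op s A b ^^ n) f) = (op s A b ^^ n) (op s A a f)"
proof (induction n)
  case (Suc n)
  show ?case by (simp only: funpow.simps comp_apply op_comm[of s A a b] Suc.IH)
qed simp

lemma op_pow_diff: "(op s A a ^^ n) (f - g) = (op s A a ^^ n) f - (op s A a ^^ n) g"
  by (induction n) (simp_all only: funpow.simps comp_apply id_apply op_diff)

lemma sg_op: "sg (op s A a f) = op s A (frob_inv a) (sg f)"
  by (simp add: op_def sg_diff sg_sc rmul_sg)

lemma sg_op_pow: "sg ((op s A a ^^ n) f) = (op s A (frob_inv a) ^^ n) (sg f)"
  by (induction n) (auto simp: sg_op)

lemma op_shift: "op s A b f = op s A a f + sc (a - b) f"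
  by (rule rw_eqI) (simp add: op_def algebra_simps)

lemma op_const: "op s A a f 0 c = rmul s A f 0 c - a * f 0 c"
  by (simp add: op_def)

lemma exists_step: "\<not> P 0 \<Longrightarrow> P (n::nat) \<Longrightarrow> \<exists>k<n. \<not> P k \<and> P (Suc k)"
  by (induction n) (auto, metis less_Suc_eq)

definition cst :: "'f::{finite,field} rw \<Rightarrow> 'f rw" where
  "cst g = (\<lambda>d c. if d = 0 then g 0 c else 0)"

lemma isrow_cst: "isrow s g \<Longrightarrow> isrow s (cst g)"
  unfolding isrow_def cst_def by (auto intro: exI[of _ 1])

lemma rmul_cst: "rmul s A (cst g) 0 c = rmul s A g 0 c"
  by (simp add: rmul_const cst_def)

lemma op_cst: "op s A a (cst g) 0 c = op s A a g 0 c"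
  by (simp add: op_const rmul_cst) (simp add: cst_def)

locale L4 =
  fixes s :: nat and th ph rh :: "'f::{finite,field} smat"
  assumes smth: "is_smat s s th" and smph: "is_smat s s ph" and smrh: "is_smat s s rh"
    and nilth: "(sdel th - Tk \<cdot>\<^sub>m 1\<^sub>m s) ^\<^sub>m s = 0\<^sub>m s s"
    and comm: "sprod s s s th ph = sprod s s s ph rh"
    and nilrh: "(sdel rh - Tk \<cdot>\<^sub>m 1\<^sub>m s) ^\<^sub>m s = 0\<^sub>m s s"
    and injph: "\<And>f. isrow s f \<Longrightarrow> rmul s ph f = 0 \<Longrightarrow> f = 0"
begin

definition inM :: "'f rw \<Rightarrow> bool" where
  "inM g \<longleftrightarrow> (\<exists>h. isrow s h \<and> g = rmul s ph h)"

lemma inM_add: "inM f \<Longrightarrow> inM g \<Longrightarrow> inM (f + g)"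
  unfolding inM_def by (metis isrow_add rmul_add)
lemma inM_diff: "inM f \<Longrightarrow> inM g \<Longrightarrow> inM (f - g)"
  unfolding inM_def by (metis isrow_diff rmul_diff)
lemma inM_sc: "inM f \<Longrightarrow> inM (sc a f)"
  unfolding inM_def by (metis isrow_sc rmul_sc)
lemma inM_zero: "inM 0"
  unfolding inM_def by (metis isrow_zero rmul_zero)
lemma inM_sg: "inM f \<Longrightarrow> inM (sg f)"
  unfolding inM_def by (metis isrow_sg rmul_sg)
lemma inM_sc_inv: "inM (sc a f) \<Longrightarrow> a \<noteq> 0 \<Longrightarrow> inM f"
  by (metis inM_sc sc_sc sc_one field_class.field_inverse mult.commute)

lemma rh_ph: "rmul s rh (rmul s ph h) = rmul s ph (rmul s th h)"
  by (simp add: rmul_assoc comm)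

lemma op_ph: "op s rh a (rmul s ph g) = rmul s ph (op s th a g)"
  by (simp add: op_def rh_ph rmul_diff rmul_sc)

lemma op_ph_pow: "(op s rh a ^^ n) (rmul s ph g) = rmul s ph ((op s th a ^^ n) g)"
  by (induction n) (auto simp: op_ph)

lemma inM_op: "inM f \<Longrightarrow> inM (op s rh a f)"
  unfolding inM_def by (metis op_ph isrow_op smth)

lemma inM_op_pow: "inM f \<Longrightarrow> inM ((op s rh a ^^ n) f)"
  by (induction n) (auto simp: inM_op)

lemma nil_th: "isrow s y \<Longrightarrow> ((op s th Tk ^^ s) y) 0 c = 0"
proof (cases "c < s")
  case True
  assume y: "isrow s y"
  have "((op s th Tk ^^ s) y) 0 c = (\<Sum>l<s. y 0 l * ((th 0 - Tk \<cdot>\<^sub>m 1\<^sub>m s) ^\<^sub>m s) $$ (l, c))"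
    by (rule op_pow_const[OF smth y True])
  also have "\<dots> = 0" using nilth True by (simp add: sdel_def)
  finally show ?thesis .
next
  case False
  assume y: "isrow s y"
  have "isrow s ((op s th Tk ^^ s) y)" by (rule isrow_op_pow[OF y smth])
  thus ?thesis using False unfolding isrow_def by simp
qed

lemma nil_rh: "isrow s y \<Longrightarrow> ((op s rh Tk ^^ s) y) 0 c = 0"
proof (cases "c < s")
  case True
  assume y: "isrow s y"
  have "((op s rh Tk ^^ s) y) 0 c = (\<Sum>l<s. y 0 l * ((rh 0 - Tk \<cdot>\<^sub>m 1\<^sub>m s) ^\<^sub>m s) $$ (l, c))"
    by (rule op_pow_const[OF smrh y True])
  also have "\<dots> = 0" using nilrh True by (simp add: sdel_def)
  finally show ?thesis .
next
  case False
  assume y: "isrow s y"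
  have "isrow s ((op s rh Tk ^^ s) y)" by (rule isrow_op_pow[OF y smrh])
  thus ?thesis using False unfolding isrow_def by simp
qed

lemma fi_Tq: "frob_inv (Tk ^ card (UNIV :: 'f set)) = (Tk :: 'f kbar)"
  by (rule fi_of_pow)

lemma ker_lemma:
  assumes d: "isrow s d" and sd: "inM (sg d)"
  shows "inM ((op s rh (Tk ^ card (UNIV :: 'f set)) ^^ s) d)"
proof -
  obtain y where y: "isrow s y" "sg d = rmul s ph y" using sd unfolding inM_def by blast
  have "sg ((op s rh (Tk ^ card (UNIV :: 'f set)) ^^ s) d) = (op s rh Tk ^^ s) (sg d)"
    by (simp add: sg_op_pow fi_Tq)
  also have "\<dots> = rmul s ph ((op s th Tk ^^ s) y)" by (simp add: y(2) op_ph_pow)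
  finally have 1: "sg ((op s rh (Tk ^ card (UNIV :: 'f set)) ^^ s) d) = rmul s ph ((op s th Tk ^^ s) y)" .
  have Yr: "isrow s ((op s th Tk ^^ s) y)" by (rule isrow_op_pow[OF y(1) smth])
  obtain z where z: "isrow s z" "(op s th Tk ^^ s) y = sg z"
    using unsg[OF Yr nil_th[OF y(1)]] by blast
  have "sg ((op s rh (Tk ^ card (UNIV :: 'f set)) ^^ s) d) = sg (rmul s ph z)"
    using 1 z(2) by (simp add: rmul_sg)
  hence "(op s rh (Tk ^ card (UNIV :: 'f set)) ^^ s) d = rmul s ph z" by (rule sg_inj)
  thus ?thesis using z(1) unfolding inM_def by blast
qed

lemma start_lemma:
  assumes det0: "det (sdel ph) = 0"
  shows "\<exists>c. isrow s c \<and> \<not> inM c \<and> inM (op s rh (Tk ^ card (UNIV :: 'f set)) c)"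
proof -
  have ph0: "ph 0 \<in> carrier_mat s s" using smph by (simp add: is_smat_def)
  obtain v where v: "\<exists>l<s. v l \<noteq> 0" "\<And>c. c < s \<Longrightarrow> (\<Sum>l<s. v l * ph 0 $$ (l, c)) = 0"
    using det0_left_kernel[OF ph0] det0 by (auto simp: sdel_def)
  define fw where "fw = (\<lambda>(d::nat) c. if d = 0 \<and> c < s then v c else 0)"
  have fw: "isrow s fw" unfolding isrow_def fw_def by (auto intro: exI[of _ 1])
  define G where "G k = (op s th Tk ^^ k) fw" for k
  have Gr: "isrow s (G k)" for k unfolding G_def by (rule isrow_op_pow[OF fw smth])
  have PG: "rmul s ph (G k) 0 c = 0" for k c
  proof (induction k arbitrary: c)
    case 0
    show ?case using v(2) by (simp add: G_def rmul_const fw_def)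
  next
    case (Suc k)
    have z: "\<And>l. rmul s ph (G k) 0 l = 0" using Suc.IH by blast
    have "rmul s ph (G (Suc k)) = op s rh Tk (rmul s ph (G k))"
      by (simp add: G_def op_ph)
    hence "rmul s ph (G (Suc k)) 0 c = rmul s rh (rmul s ph (G k)) 0 c - Tk * rmul s ph (G k) 0 c"
      by (simp add: op_const)
    also have "\<dots> = 0" by (simp only: rmul_const[of s rh] z) simp
    finally show ?case .
  qed
  define Z where "Z k \<longleftrightarrow> (\<forall>c. G k 0 c = 0)" for k
  have "\<not> Z 0" using v(1) by (auto simp: Z_def G_def fw_def)
  moreover have "Z s" using nil_th[OF fw] by (simp add: Z_def G_def)
  ultimately obtain k where k: "\<not> Z k" "Z (Suc k)" using exists_step[of Z s] by blast
  define v' where "v' = cst (G k)"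
  have v'r: "isrow s v'" unfolding v'_def by (rule isrow_cst[OF Gr])
  have v'nz: "\<exists>c. v' 0 c \<noteq> 0" using k(1) by (auto simp: Z_def v'_def cst_def)
  have v'ph: "rmul s ph v' 0 c = 0" for c unfolding v'_def rmul_cst by (rule PG)
  have v'th: "op s th Tk v' 0 c = 0" for c
    unfolding v'_def op_cst using k(2) by (simp add: Z_def G_def)
  have "isrow s (rmul s ph v')" by (rule isrow_rmul[OF v'r smph])
  then obtain w where w: "isrow s w" "rmul s ph v' = sg w" using unsg v'ph by blast
  have nw: "\<not> inM w"
  proof
    assume "inM w"
    then obtain z where z: "isrow s z" "w = rmul s ph z" unfolding inM_def by blast
    have "rmul s ph (v' - sg z) = 0"
      by (simp add: rmul_diff w(2) z(2) rmul_sg)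
    hence "v' - sg z = 0" using injph isrow_diff[OF v'r isrow_sg[OF z(1)]] by blast
    hence "v' 0 c = 0" for c using fun_cong[OF fun_cong[OF \<open>v' - sg z = 0\<close>, of 0], of c]
      by (simp add: sg_def)
    with v'nz show False by blast
  qed
  have ow: "inM (op s rh (Tk ^ card (UNIV :: 'f set)) w)"
  proof -
    have "sg (op s rh (Tk ^ card (UNIV :: 'f set)) w) = op s rh Tk (sg w)"
      by (simp add: sg_op fi_Tq)
    also have "\<dots> = rmul s ph (op s th Tk v')" by (simp add: w(2)[symmetric] op_ph)
    finally have 1: "sg (op s rh (Tk ^ card (UNIV :: 'f set)) w) = rmul s ph (op s th Tk v')" .
    have "isrow s (op s th Tk v')" by (rule isrow_op[OF v'r smth])
    then obtain z where z: "isrow s z" "op s th Tk v' = sg z" using unsg v'th by blast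
    have "sg (op s rh (Tk ^ card (UNIV :: 'f set)) w) = sg (rmul s ph z)"
      using 1 z(2) by (simp add: rmul_sg)
    hence "op s rh (Tk ^ card (UNIV :: 'f set)) w = rmul s ph z" by (rule sg_inj)
    thus ?thesis using z(1) unfolding inM_def by blast
  qed
  show ?thesis using w(1) nw ow by blast
qed

end

lemma lin_id:
  fixes Y Z c :: "'f::{finite,field} rw"
  shows "Y - sc (b ^ Suc n) c = (Y - sc (b ^ n) (Z + sc b c)) + sc (b ^ n) Z"
  by (rule rw_eqI) (simp add: algebra_simps)

lemma divmod_eq_iff: "(k' div s = k div s \<and> k' mod s = k mod s) \<longleftrightarrow> k' = (k::nat)"
  by (metis div_mult_mod_eq)

lemma bound_family:
  fixes P :: "nat \<Rightarrow> nat \<Rightarrow> bool"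
  shows "(\<And>l. \<exists>N. \<forall>d\<ge>N. P l d) \<Longrightarrow> \<exists>L. \<forall>l\<le>(D::nat). \<forall>d\<ge>L. P l d"
proof (induction D)
  case 0 thus ?case by auto
next
  case (Suc D)
  obtain L where L: "\<forall>l\<le>D. \<forall>d\<ge>L. P l d" using Suc.IH[OF Suc.prems] by blast
  obtain N where N: "\<forall>d\<ge>N. P (Suc D) d" using Suc.prems[of "Suc D"] by blast
  show ?case
  proof (rule exI[of _ "max L N"], intro allI impI)
    fix l d assume ld: "l \<le> Suc D" "max L N \<le> d"
    show "P l d"
    proof (cases "l = Suc D")
      case True
      have "N \<le> d" by (rule order_trans[OF max.cobounded2 ld(2)])
      thus ?thesis using N True by blast
    next
      case False
      have "L \<le> d" by (rule order_trans[OF max.cobounded1 ld(2)])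
      moreover have "l \<le> D" using False ld(1) by simp
      ultimately show ?thesis using L by blast
    qed
  qed
qed

context L4
begin

lemma inM_sum: "(\<And>k. k \<in> K \<Longrightarrow> inM (F k)) \<Longrightarrow> inM (\<Sum>k\<in>K. F k)"
proof (induction K rule: infinite_finite_induct)
  case (insert x K)
  show ?case unfolding sum.insert[OF insert(1,2)] by (rule inM_add) (use insert in auto)
next
  case (infinite K)
  show ?case by (simp only: sum.infinite[OF infinite(1)] inM_zero)
next
  case empty
  show ?case by (simp only: sum.empty inM_zero)
qed

lemma eig_pow:
  assumes c: "isrow s c" and e: "inM (op s rh m c)"
  shows "inM ((op s rh a ^^ n) c - sc ((m - a) ^ n) c)"
proof (induction n)
  case 0
  have h: "(op s rh a ^^ 0) c - sc ((m - a) ^ 0) c = 0" by (rule rw_eqI) simp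
  show ?case unfolding h by (rule inM_zero)
next
  case (Suc n)
  have 1: "op s rh a ((op s rh a ^^ n) c - sc ((m - a) ^ n) c) = (op s rh a ^^ Suc n) c - sc ((m - a) ^ n) (op s rh a c)"
    by (simp only: op_diff op_sc funpow.simps comp_apply)
  have 2: "op s rh a c = op s rh m c + sc (m - a) c" by (rule op_shift)
  have eq: "(op s rh a ^^ Suc n) c - sc ((m - a) ^ Suc n) c
      = op s rh a ((op s rh a ^^ n) c - sc ((m - a) ^ n) c) + sc ((m - a) ^ n) (op s rh m c)"
    unfolding 1 2 by (rule lin_id)
  show ?case unfolding eq by (rule inM_add[OF inM_op[OF Suc.IH] inM_sc[OF e]])
qed

lemma step_lemma:
  assumes mT: "m \<noteq> Tk" and c: "isrow s c" and nc: "\<not> inM c" and e: "inM (op s rh m c)"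
  shows "\<exists>c'. isrow s c' \<and> \<not> inM c' \<and> inM (op s rh (m ^ card (UNIV::'f set)) c')"
proof -
  define lam where "lam = (m - Tk) ^ s"
  have lam0: "lam \<noteq> 0" using mT by (simp add: lam_def)
  have i: "inM ((op s rh Tk ^^ s) c - sc lam c)" unfolding lam_def by (rule eig_pow[OF c e])
  have Yr: "isrow s ((op s rh Tk ^^ s) c)" by (rule isrow_op_pow[OF c smrh])
  obtain e' where e': "isrow s e'" "(op s rh Tk ^^ s) c = sg e'" using unsg[OF Yr nil_rh[OF c]] by blast
  define c2 where "c2 = sc ((inverse lam) ^ card (UNIV::'f set)) e'"
  have c2r: "isrow s c2" unfolding c2_def by (rule isrow_sc[OF e'(1)])
  have sgc2: "sg c2 = sc (inverse lam) (sg e')" unfolding c2_def by (simp add: sg_sc fi_of_pow)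
  have ii: "inM (c - sg c2)"
  proof -
    have "c - sg c2 = sc (- inverse lam) (sg e' - sc lam c)"
      unfolding sgc2 using lam0 by (intro rw_eqI) (simp add: field_simps)
    thus ?thesis using inM_sc[OF i[unfolded e'(2)], of "- inverse lam"] by simp
  qed
  define d where "d = op s rh (m ^ card (UNIV::'f set)) c2"
  have dr: "isrow s d" unfolding d_def by (rule isrow_op[OF c2r smrh])
  have "sg d = op s rh m (sg c2)" unfolding d_def by (simp add: sg_op fi_of_pow)
  also have "\<dots> = op s rh m c - op s rh m (c - sg c2)" by (simp only: op_diff diff_diff_eq2 add_diff_cancel_left')
  finally have "inM (sg d)" using inM_diff[OF e inM_op[OF ii]] by simp
  hence iii: "inM ((op s rh (Tk ^ card (UNIV::'f set)) ^^ s) d)" by (rule ker_lemma[OF dr])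
  define c' where "c' = (op s rh (Tk ^ card (UNIV::'f set)) ^^ s) c2"
  have c'r: "isrow s c'" unfolding c'_def by (rule isrow_op_pow[OF c2r smrh])
  have iv: "inM (op s rh (m ^ card (UNIV::'f set)) c')" unfolding c'_def op_pow_comm using iii unfolding d_def .
  have v: "\<not> inM c'"
  proof
    assume "inM c'"
    hence 1: "inM (sg c')" by (rule inM_sg)
    have 2: "sg c' = (op s rh Tk ^^ s) (sg c2)" unfolding c'_def by (simp add: sg_op_pow fi_Tq)
    have 3: "(op s rh Tk ^^ s) (sg c2) = (op s rh Tk ^^ s) c - (op s rh Tk ^^ s) (c - sg c2)"
      by (simp only: op_pow_diff diff_diff_eq2 add_diff_cancel_left')
    have 4: "inM ((op s rh Tk ^^ s) c - (op s rh Tk ^^ s) (c - sg c2))" using 1 unfolding 2 3 .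
    have 5: "inM ((op s rh Tk ^^ s) c)" using inM_add[OF 4 inM_op_pow[OF ii, where a=Tk and n=s]] unfolding diff_add_cancel .
    have 6: "(op s rh Tk ^^ s) c - ((op s rh Tk ^^ s) c - sc lam c) = sc lam c" by (simp only: diff_diff_eq2 add_diff_cancel_left')
    have "inM (sc lam c)" using inM_diff[OF 5 i] unfolding 6 .
    hence "inM c" using inM_sc_inv lam0 by blast
    with nc show False by blast
  qed
  show ?thesis using c'r v iv by blast
qed

lemma chain:
  assumes det0: "det (sdel ph) = 0"
  shows "\<exists>c. isrow s c \<and> \<not> inM c \<and> inM (op s rh (mu TYPE('f) n) c)"
proof (induction n)
  case 0 show ?case using start_lemma[OF det0] by (simp add: mu_0)
next
  case (Suc n)
  then obtain c where "isrow s c" "\<not> inM c" "inM (op s rh (mu TYPE('f) n) c)" by blast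
  from step_lemma[OF mu_neq_T this] show ?case by (simp add: mu_pow)
qed

lemma indep:
  assumes cc1: "\<And>n. isrow s (cc n)" and cc2: "\<And>n. \<not> inM (cc n)"
    and cc3: "\<And>n. inM (op s rh (mu TYPE('f) n) (cc n))"
  shows "inM (\<Sum>l<m. sc (a l) (cc l)) \<Longrightarrow> \<forall>l<m. a l = 0"
proof (induction m arbitrary: a)
  case 0 thus ?case by simp
next
  case (Suc m)
  define b where "b l = a l * (mu TYPE('f) l - mu TYPE('f) m)" for l
  have o1: "op s rh (mu TYPE('f) m) (\<Sum>l<Suc m. sc (a l) (cc l)) = (\<Sum>l<Suc m. sc (a l) (op s rh (mu TYPE('f) l) (cc l) + sc (mu TYPE('f) l - mu TYPE('f) m) (cc l)))"
    unfolding op_sum op_sc by (rule sum.cong[OF refl]) (metis op_shift)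
  have key: "(\<Sum>l<m. sc (b l) (cc l)) = op s rh (mu TYPE('f) m) (\<Sum>l<Suc m. sc (a l) (cc l)) - (\<Sum>l<Suc m. sc (a l) (op s rh (mu TYPE('f) l) (cc l)))"
    unfolding o1 by (rule rw_eqI) (simp add: sum_fun_app b_def algebra_simps sum.distrib sum_subtractf)
  have "inM (\<Sum>l<m. sc (b l) (cc l))" unfolding key
    by (intro inM_diff inM_op Suc.prems inM_sum inM_sc cc3)
  hence b0: "\<forall>l<m. b l = 0" by (rule Suc.IH)
  have a0: "a l = 0" if "l < m" for l
  proof -
    have neq: "mu TYPE('f) l \<noteq> mu TYPE('f) m" using that mu_inj by blast
    have "a l * (mu TYPE('f) l - mu TYPE('f) m) = 0" using b0 that by (simp add: b_def)
    thus ?thesis using neq by simp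
  qed
  have S: "(\<Sum>l<Suc m. sc (a l) (cc l)) = sc (a m) (cc m)"
    by (rule rw_eqI) (simp add: sum_fun_app a0)
  have "inM (sc (a m) (cc m))" using Suc.prems unfolding S .
  hence "a m = 0" using inM_sc_inv cc2 by blast
  thus ?case using a0 less_Suc_eq by blast
qed

lemma ph_vanish:
  assumes f: "\<forall>i\<ge>L. \<forall>c. f i c = 0" and e: "\<forall>i\<ge>e. ph i = 0\<^sub>m s s" and d: "L + e \<le> d"
  shows "rmul s ph f d c = 0"
proof -
  have "f i l * (frob_inv ^^ i) (ph (d - i) $$ (l, c)) = 0" if "l < s" "c < s" for i l
  proof (cases "i \<ge> L")
    case True thus ?thesis using f by simp
  next
    case False
    hence "ph (d - i) = 0\<^sub>m s s" using e d by simp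
    thus ?thesis using that by (simp add: fin_0)
  qed
  thus ?thesis unfolding rmul_def by (auto intro!: sum.neutral)
qed

lemma dim_lemma:
  assumes s0: "0 < s"
  shows "\<exists>D. \<forall>cc :: nat \<Rightarrow> 'f rw. (\<forall>l. isrow s (cc l)) \<longrightarrow> (\<exists>a. (\<exists>l\<le>D. a l \<noteq> 0) \<and> inM (\<Sum>l\<le>D. sc (a l) (cc l)))"
proof -
  obtain e where e: "\<forall>i\<ge>e. ph i = 0\<^sub>m s s" using smph unfolding is_smat_def by blast
  define D where "D = e * s"
  have "\<exists>a. (\<exists>l\<le>D. a l \<noteq> 0) \<and> inM (\<Sum>l\<le>D. sc (a l) (cc l))" if rows: "\<forall>l. isrow s (cc l)" for cc
  proof -
    obtain L where L: "\<forall>l\<le>D. \<forall>d\<ge>L. \<forall>c. cc l d c = 0"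
      using bound_family[of "\<lambda>l d. \<forall>c. cc l d c = 0" D] rows unfolding isrow_def by blast
    define n where "n = (L + e) * s"
    define ub :: "nat \<Rightarrow> 'f rw" where "ub k = (\<lambda>d c. if d = k div s \<and> c = k mod s then 1 else 0)" for k
    define w where "w k = (if k < L * s then rmul s ph (ub k) else cc (k - L * s))" for k
    obtain a where a: "\<exists>k\<le>n. a k \<noteq> 0" "\<forall>i<n. (\<Sum>k\<le>n. a k * w k (i div s) (i mod s)) = 0"
      using many_vecs_dep[of n "\<lambda>k i. w k (i div s) (i mod s)"] by blast
    have ubr: "isrow s (ub k)" for k
      unfolding isrow_def ub_def using s0 mod_less_divisor[OF s0, of k] by (auto intro: exI[of _ "Suc (k div s)"])
    have wr: "isrow s (w k)" for k unfolding w_def using ubr rows isrow_rmul[OF _ smph] by auto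
    have wv: "w k d c = 0" if "k \<le> n" "L + e \<le> d" for k d c
    proof (cases "k < L * s")
      case True
      hence "k div s < L" using s0 by (simp add: div_less_iff_less_mult)
      hence "\<forall>i\<ge>L. \<forall>c. ub k i c = 0" by (auto simp: ub_def)
      thus ?thesis using True ph_vanish[OF _ e that(2)] by (simp add: w_def)
    next
      case False
      have "n = L * s + D" unfolding n_def D_def by (simp add: algebra_simps)
      hence "k - L * s \<le> D" using that(1) by simp
      thus ?thesis using False L that(2) by (simp add: w_def)
    qed
    have Z: "(\<Sum>k\<le>n. sc (a k) (w k)) = 0"
    proof (rule rw_eqI)
      fix d c
      show "(\<Sum>k\<le>n. sc (a k) (w k)) d c = 0 d c"
      proof (cases "s \<le> c \<or> L + e \<le> d")
        case True
        have "w k d c = 0" if "k \<le> n" for k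
          using True wr[of k] wv[OF that] unfolding isrow_def by auto
        thus ?thesis by (simp add: sum_fun_app)
      next
        case False
        define i where "i = d * s + c"
        have "Suc d \<le> L + e" using False by simp
        hence "Suc d * s \<le> (L + e) * s" by (rule mult_le_mono1)
        hence i1: "i < n" using False unfolding i_def n_def by simp
        have i2: "i div s = d" "i mod s = c" using False unfolding i_def by simp_all
        show ?thesis using a(2)[rule_format, OF i1] i2 by (simp add: sum_fun_app)
      qed
    qed
    define Xs where "Xs = (\<Sum>k<L*s. sc (a k) (ub k))"
    have Xsr: "isrow s Xs" unfolding Xs_def by (intro isrow_sum isrow_sc ubr)
    have RX: "rmul s ph Xs = (\<Sum>k<L*s. sc (a k) (w k))"
      unfolding Xs_def rmul_sum rmul_sc by (rule sum.cong) (auto simp: w_def)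
    define aa where "aa l = a (l + L * s)" for l
    have split: "(\<Sum>k\<le>n. sc (a k) (w k)) = (\<Sum>k<L*s. sc (a k) (w k)) + (\<Sum>l\<le>D. sc (aa l) (cc l))"
    proof -
      have nn: "n = D + L*s" unfolding n_def D_def by (simp add: algebra_simps)
      have un: "{..n} = {..<L*s} \<union> {L*s..n}" by (auto simp: n_def algebra_simps)
      have "(\<Sum>k\<le>n. sc (a k) (w k)) = (\<Sum>k<L*s. sc (a k) (w k)) + (\<Sum>k\<in>{L*s..n}. sc (a k) (w k))"
        unfolding un by (rule sum.union_disjoint) auto
      also have "(\<Sum>k\<in>{L*s..n}. sc (a k) (w k)) = (\<Sum>l\<in>{0..D}. sc (a (l + L*s)) (w (l + L*s)))"
        unfolding nn using sum.shift_bounds_cl_nat_ivl[of "\<lambda>k. sc (a k) (w k)" 0 "L*s" D] by simp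
      also have "\<dots> = (\<Sum>l\<le>D. sc (aa l) (cc l))" unfolding aa_def atLeast0AtMost
        by (rule sum.cong) (auto simp: w_def)
      finally show ?thesis .
    qed
    have S2: "(\<Sum>l\<le>D. sc (aa l) (cc l)) = rmul s ph (- Xs)"
    proof -
      have "rmul s ph Xs + (\<Sum>l\<le>D. sc (aa l) (cc l)) = 0" using Z split RX by simp
      thus ?thesis unfolding rmul_uminus by (metis add.commute add_eq_0_iff)
    qed
    have inM2: "inM (\<Sum>l\<le>D. sc (aa l) (cc l))" unfolding S2 inM_def using isrow_uminus[OF Xsr] by blast
    have nz: "\<exists>l\<le>D. aa l \<noteq> 0"
    proof (rule ccontr)
      assume "\<not> ?thesis"
      hence A0: "\<forall>l\<le>D. aa l = 0" by auto
      hence "(\<Sum>l\<le>D. sc (aa l) (cc l)) = 0" by (intro rw_eqI) (simp add: sum_fun_app)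
      hence "rmul s ph Xs = 0" using S2 rmul_uminus by (metis neg_equal_0_iff_equal)
      hence Xs0: "Xs = 0" by (rule injph[OF Xsr])
      have ak1: "a k = 0" if "k < L * s" for k
      proof -
        have "Xs (k div s) (k mod s) = (\<Sum>k'<L*s. a k' * (if k' = k then 1 else 0))"
          unfolding Xs_def sum_fun_app sc_app ub_def by (intro sum.cong refl) (simp add: divmod_eq_iff)
        also have "\<dots> = (\<Sum>k'<L*s. if k' = k then a k' else 0)" by (rule sum.cong) auto
        also have "\<dots> = a k" using that by (simp add: sum.delta)
        finally show ?thesis using Xs0 by simp
      qed
      have ak2: "a k = 0" if "L * s \<le> k" "k \<le> n" for k
      proof -
        have "n = L * s + D" unfolding n_def D_def by (simp add: algebra_simps)
        hence "k - L * s \<le> D" using that by simp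
        hence "aa (k - L * s) = 0" using A0 by simp
        thus ?thesis using that(1) by (simp add: aa_def)
      qed
      show False using a(1) ak1 ak2 by (meson not_le)
    qed
    show ?thesis using nz inM2 by blast
  qed
  thus ?thesis by blast
qed

lemma contradiction_det0:
  assumes s0: "0 < s" and det0: "det (sdel ph) = 0"
  shows False
proof -
  obtain D where D: "\<forall>cc :: nat \<Rightarrow> 'f rw. (\<forall>l. isrow s (cc l)) \<longrightarrow> (\<exists>a. (\<exists>l\<le>D. a l \<noteq> 0) \<and> inM (\<Sum>l\<le>D. sc (a l) (cc l)))"
    using dim_lemma[OF s0] by blast
  have "\<forall>n. \<exists>c. isrow s c \<and> \<not> inM c \<and> inM (op s rh (mu TYPE('f) n) c)" using chain[OF det0] by blast
  then obtain cc where cc: "\<And>n. isrow s (cc n)" "\<And>n. \<not> inM (cc n)" "\<And>n. inM (op s rh (mu TYPE('f) n) (cc n))"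
    by metis
  obtain a where a: "\<exists>l\<le>D. a l \<noteq> 0" "inM (\<Sum>l\<le>D. sc (a l) (cc l))" using D cc(1) by blast
  have "inM (\<Sum>l<Suc D. sc (a l) (cc l))" using a(2) by (simp add: lessThan_Suc_atMost)
  hence "\<forall>l<Suc D. a l = 0" by (rule indep[OF cc])
  with a(1) show False by auto
qed

end

lemma inj_conv:
  fixes ph :: "'f::{finite,field} smat"
  assumes H: "\<forall>x y. is_smat 1 s x \<longrightarrow> is_smat 1 s y \<longrightarrow>
           sprod 1 s s x ph = sprod 1 s s y ph \<longrightarrow> x = y"
    and f: "isrow s f" and z: "rmul s ph f = 0"
  shows "f = 0"
proof -
  define tosm :: "'f rw \<Rightarrow> 'f smat" where "tosm g = (\<lambda>d. mat 1 s (\<lambda>(r, c). g d c))" for g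
  have ism: "is_smat 1 s (tosm g)" if g: "isrow s g" for g
  proof -
    obtain N where N: "\<forall>d\<ge>N. \<forall>c. g d c = 0" using g unfolding isrow_def by blast
    have "\<forall>i\<ge>N. tosm g i = 0\<^sub>m 1 s" using N unfolding tosm_def by (auto intro!: eq_matI)
    thus ?thesis unfolding is_smat_def tosm_def by auto
  qed
  have sp: "sprod 1 s s (tosm g) ph = tosm (rmul s ph g)" for g
  proof (rule ext)
    fix d
    show "sprod 1 s s (tosm g) ph d = tosm (rmul s ph g) d"
      unfolding sprod_def tosm_def rmul_def by (rule eq_matI) (auto intro!: sum.cong)
  qed
  have "sprod 1 s s (tosm f) ph = sprod 1 s s (tosm 0) ph" unfolding sp z rmul_zero ..
  hence T: "tosm f = tosm 0" using H ism[OF f] ism[OF isrow_zero] by blast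
  show ?thesis
  proof (rule rw_eqI)
    fix d c
    show "f d c = 0 d c"
    proof (cases "c < s")
      case True
      have "tosm f d $$ (0, c) = tosm 0 d $$ (0, c)" using T by simp
      thus ?thesis using True unfolding tosm_def by simp
    next
      case False thus ?thesis using f unfolding isrow_def by simp
    qed
  qed
qed

theorem lemma4:
  fixes s :: nat and \<theta> \<phi> \<rho> :: "'f::{finite,field} smat"
  assumes "is_smat s s \<theta>" and "is_smat s s \<phi>" and "is_smat s s \<rho>"
    and "(sdel \<theta> - Tk \<cdot>\<^sub>m 1\<^sub>m s) ^\<^sub>m s = 0\<^sub>m s s"
    and "sprod s s s \<theta> \<phi> = sprod s s s \<phi> \<rho>"
    and "(sdel \<rho> - Tk \<cdot>\<^sub>m 1\<^sub>m s) ^\<^sub>m s = 0\<^sub>m s s"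
    and "\<forall>x y. is_smat 1 s x \<longrightarrow> is_smat 1 s y \<longrightarrow>
           sprod 1 s s x \<phi> = sprod 1 s s y \<phi> \<longrightarrow> x = y"
  shows "det (sdel \<phi>) \<noteq> 0"
proof (cases "s = 0")
  case True
  have "sdel \<phi> \<in> carrier_mat 0 0" using assms(2) True by (simp add: is_smat_def sdel_def)
  hence "sdel \<phi> = 1\<^sub>m 0" by (intro eq_matI) auto
  thus ?thesis by simp
next
  case False
  interpret L: L4 s \<theta> \<phi> \<rho>
  proof (unfold_locales)
    fix f assume "isrow s f" "rmul s \<phi> f = 0"
    thus "f = 0" using inj_conv[OF assms(7)] by blast
  qed (use assms in auto)
  show ?thesis
  proof
    assume "det (sdel \<phi>) = 0"
    thus False using L.contradiction_det0 False by blast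
  qed
qed


end
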